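(* Let $\mathbb{M}$ be a weight sequence with sequence of quotients $\mathbf{m}=(m_p)_{p\in\mathbb{N}_0}$, and let $\alpha>0$. The following are equivalent: (i) there exists $C>0$ such that $\sum_{k=0}^{p}\frac{(k+1)^{\alpha-1}}{m_k}\le C\frac{(p+1)^{\alpha}}{m_p}$ for all $p\in\mathbb{N}_0$; (ii) there exists $\varepsilon\in(0,\alpha)$ such that $(m_p/p^{\alpha-\varepsilon})_{p\in\mathbb{N}}$ is almost decreasing; (iii) there exists a sequence $\mathbf{h}\simeq\mathbf{m}$ such that $((p+1)^{-\alpha}h_p)_{p\in\mathbb{N}_0}$ is nonincreasing and $\sup_{p\ge1}\frac{h_{2p}}{h_p}<2^{\alpha}$; (iv) $\lim_{k\to\infty}\limsup_{p\to\infty}\frac{m_{kp}}{k^{\alpha}m_p}=0$; (v) there exists $k\in\mathbb{N}$, $k\ge2$, such that $\limsup_{p\to\infty}\frac{m_{kp}}{m_p}<k^{\alpha}$; (vi) for every $\theta\in(0,1)$ there exists $k\in\mathbb{N}$, $k\ge2$, such that $m_{kp}\le\theta k^{\alpha}m_p$ for every $p\in\mathbb{N}$; (vii) $\alpha(\mathbf{m})<\alpha$; (viii) there exists $C>0$ such that $\sum_{k=p+1}^{\infty}\frac{m_k}{(k+1)^{1+\alpha}}\le C\frac{m_p}{(p+1)^{\alpha}}$ for every $p\in\mathbb{N}_0$.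
   Context: A weight sequence is a sequence $\mathbb{M}=(M_p)_{p\in\mathbb{N}_0}$ of positive reals with $M_0=1$, logarithmically convex ($M_p^2\le M_{p-1}M_{p+1}$ for $p\in\mathbb{N}$) and $\lim_{p\to\infty}M_p^{1/p}=\infty$; its quotients are $m_p=M_{p+1}/M_p$. A sequence $(a_p)_{p\in\mathbb{N}}$ is almost decreasing if there is $m>0$ with $m\,a_q\le a_p$ for all $p\le q$. $\mathbf{h}\simeq\mathbf{m}$ means there is $c\ge1$ with $c^{-1}m_p\le h_p\le cm_p$ for all $p$. $\alpha(\mathbf{m})$ is the upper Matuszewska index of the sequence $(m_{p-1})_{p\in\mathbb{N}}$, defined as $\alpha(f)$ for the step function $f(x)=m_{\lfloor x\rfloor-1}$, $x\ge1$, where $\alpha(f):=\inf\{\alpha\in\mathbb{R}:\exists C_\alpha>0\ \forall\Lambda>1,\ \limsup_{x\to\infty}\sup_{\lambda\in[1,\Lambda]}\frac{f(\lambda x)}{\lambda^{\alpha}f(x)}\le C_\alpha\}$ ($\inf\emptyset=\infty$). *)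

theory Defs
  imports "HOL-Analysis.Analysis"
begin

definition weight_sequence :: "(nat \<Rightarrow> real) \<Rightarrow> bool" where
  "weight_sequence M \<longleftrightarrow>
     (\<forall>p. 0 < M p) \<and> M 0 = 1 \<and>
     (\<forall>p\<ge>1. (M p)\<^sup>2 \<le> M (p - 1) * M (p + 1)) \<and>
     filterlim (\<lambda>p. M p powr (1 / real p)) at_top sequentially"

definition quotients :: "(nat \<Rightarrow> real) \<Rightarrow> nat \<Rightarrow> real" where
  "quotients M p = M (Suc p) / M p"

definition almost_decreasing :: "(nat \<Rightarrow> real) \<Rightarrow> bool" where
  "almost_decreasing a \<longleftrightarrow> (\<exists>m>0. \<forall>p q. 1 \<le> p \<longrightarrow> p \<le> q \<longrightarrow> m * a q \<le> a p)"

definition seq_equiv :: "(nat \<Rightarrow> real) \<Rightarrow> (nat \<Rightarrow> real) \<Rightarrow> bool" where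
  "seq_equiv h m \<longleftrightarrow> (\<exists>c\<ge>1. \<forall>p. m p / c \<le> h p \<and> h p \<le> c * m p)"

text \<open>Upper Matuszewska index of a function f (values in extended reals, Inf of empty set = infinity).\<close>
definition upper_matuszewska :: "(real \<Rightarrow> real) \<Rightarrow> ereal" where
  "upper_matuszewska f = Inf {ereal a | a. \<exists>C>0. \<forall>\<Lambda>>1.
      Limsup at_top (\<lambda>x. SUP t\<in>{1..\<Lambda>}. ereal (f (t * x) / (t powr a * f x))) \<le> ereal C}"

definition alpha_index :: "(nat \<Rightarrow> real) \<Rightarrow> ereal" where
  "alpha_index m = upper_matuszewska (\<lambda>x. m (nat \<lfloor>x\<rfloor> - 1))"

end

theory Submission
  imports Defs
begin

lemma mvt_powr:
  fixes x g :: real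
  assumes "1 \<le> x"
  shows "\<exists>z. x < z \<and> z < x + 1 \<and> (x+1) powr g - x powr g = g * z powr (g - 1)"
proof -
  have "\<exists>z::real. x < z \<and> z < x+1 \<and> ((x+1) powr g - x powr g = ((x+1) - x) * (g * z powr (g-1)))"
    by (rule MVT2) (use assms in \<open>auto intro!: has_real_derivative_powr\<close>)
  then show ?thesis by auto
qed

lemma sum_powr_upper:
  fixes e :: real
  assumes "0 < e"
  shows "(\<Sum>k<n. real (k+1) powr (e-1)) \<le> (1 + 1/e) * real n powr e"
proof (cases "1 \<le> e")
  case True
  have "(\<Sum>k<n. real (k+1) powr (e-1)) \<le> (\<Sum>k<n. real n powr (e-1))"
    by (rule sum_mono) (use True in \<open>auto intro!: powr_mono2\<close>)
  also have "\<dots> = real n powr e"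
  proof (cases "n = 0")
    case False
    then show ?thesis by (simp add: powr_diff field_simps)
  qed simp
  also have "\<dots> \<le> (1 + 1/e) * real n powr e" using assms by (simp add: field_simps)
  finally show ?thesis .
next
  case False
  have key: "n \<ge> 1 \<Longrightarrow> (\<Sum>k<n. real (k+1) powr (e-1)) \<le> 1 + (real n powr e - 1) / e" for n
  proof (induction n)
    case 0 then show ?case by simp
  next
    case (Suc n)
    show ?case
    proof (cases "n = 0")
      case True then show ?thesis by simp
    next
      case nz: False
      obtain z where z: "real n < z" "z < real n + 1"
        and eq: "(real n + 1) powr e - real n powr e = e * z powr (e - 1)"
        using mvt_powr[of "real n" e] nz by auto
      have "real (n+1) powr (e-1) \<le> z powr (e-1)"
        using z False nz by (intro powr_mono2') auto
      have rs: "real (Suc n) = real n + 1" by simp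
      have "(real (Suc n) powr e - 1) / e = (real n powr e - 1) / e + z powr (e-1)"
        unfolding rs using eq assms by (simp add: field_simps)
      moreover have "(\<Sum>k<Suc n. real (k+1) powr (e-1)) = (\<Sum>k<n. real (k+1) powr (e-1)) + real (n+1) powr (e-1)"
        by simp
      moreover have "(\<Sum>k<n. real (k+1) powr (e-1)) \<le> 1 + (real n powr e - 1) / e"
        using Suc nz by simp
      ultimately show ?thesis using \<open>real (n+1) powr (e-1) \<le> z powr (e-1)\<close> by linarith
    qed
  qed
  show ?thesis
  proof (cases "n = 0")
    case True then show ?thesis by simp
  next
    case nz: False
    have "(\<Sum>k<n. real (k+1) powr (e-1)) \<le> 1 + (real n powr e - 1) / e" using key nz by simp
    also have "\<dots> \<le> real n powr e / e" using False assms by (simp add: field_simps)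
    also have "\<dots> \<le> (1 + 1/e) * real n powr e" by (simp add: field_simps)
    finally show ?thesis .
  qed
qed

lemma sum_powr_lower:
  fixes a :: real
  assumes "0 < a"
  shows "min 1 (1/a) * real n powr a \<le> (\<Sum>k<n. real (k+1) powr (a-1))"
proof (cases "a < 1")
  case True
  have "real n powr a = (\<Sum>k<n. real n powr (a-1))"
  proof (cases "n = 0")
    case False
    then show ?thesis by (simp add: powr_diff field_simps)
  qed simp
  also have "\<dots> \<le> (\<Sum>k<n. real (k+1) powr (a-1))"
    by (rule sum_mono) (use True in \<open>auto intro!: powr_mono2'\<close>)
  moreover have "min 1 (1/a) * real n powr a \<le> 1 * real n powr a"
    by (rule mult_right_mono) auto
  ultimately show ?thesis by simp
next
  case False
  have key: "real n powr a / a \<le> (\<Sum>k<n. real (k+1) powr (a-1))" for n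
  proof (induction n)
    case 0 then show ?case by simp
  next
    case (Suc n)
    show ?case
    proof (cases "n = 0")
      case True then show ?thesis using False by simp
    next
      case nz: False
      obtain z where z: "real n < z" "z < real n + 1"
        and eq: "(real n + 1) powr a - real n powr a = a * z powr (a - 1)"
        using mvt_powr[of "real n" a] nz by auto
      have "z powr (a-1) \<le> real (n+1) powr (a-1)"
        using z False nz by (intro powr_mono2) auto
      have rs: "real (Suc n) = real n + 1" by simp
      have "real (Suc n) powr a / a = real n powr a / a + z powr (a-1)"
        unfolding rs using eq assms by (simp add: field_simps)
      moreover have "(\<Sum>k<Suc n. real (k+1) powr (a-1)) = (\<Sum>k<n. real (k+1) powr (a-1)) + real (n+1) powr (a-1)"
        by simp
      ultimately show ?thesis using Suc.IH \<open>z powr (a-1) \<le> real (n+1) powr (a-1)\<close> by linarith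
    qed
  qed
  have "min 1 (1/a) * real n powr a \<le> (1/a) * real n powr a"
    by (rule mult_right_mono) auto
  moreover have "(1/a) * real n powr a = real n powr a / a" by simp
  ultimately show ?thesis using key[of n] by linarith
qed

lemma tail_powr:
  fixes e :: real
  assumes "0 < e"
  shows "summable (\<lambda>j. real (N + j + 2) powr (-1-e))"
    and "(\<Sum>j. real (N + j + 2) powr (-1-e)) \<le> (1/e) * real (N+1) powr (-e)"
proof -
  have tm: "real (N + j + 2) powr (-1-e) \<le> (real (N+j+1) powr (-e) - real (N+j+2) powr (-e)) / e" for j
  proof -
    obtain z where z: "real (N+j+1) < z" "z < real (N+j+1) + 1"
      and eq: "(real (N+j+1) + 1) powr (-e) - real (N+j+1) powr (-e) = (-e) * z powr (-e - 1)"
      using mvt_powr[of "real (N+j+1)" "-e"] by auto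
    have h1: "real (N+j+1) + 1 = real (N+j+2)" by simp
    have h2: "-e-1 = -1-e" by simp
    from eq have eq2: "real (N+j+2) powr (-e) - real (N+j+1) powr (-e) = (-e) * z powr (-1-e)"
      by (simp only: h1 h2)
    have "real (N+j+2) powr (-1-e) \<le> z powr (-1-e)"
      using z assms by (intro powr_mono2') auto
    hence "e * real (N+j+2) powr (-1-e) \<le> e * z powr (-1-e)"
      using assms by (intro mult_left_mono) auto
    with eq2 have "e * real (N+j+2) powr (-1-e) \<le> real (N+j+1) powr (-e) - real (N+j+2) powr (-e)"
      by linarith
    then show ?thesis using assms by (simp add: field_simps)
  qed
  have part: "(\<Sum>j<n. real (N + j + 2) powr (-1-e)) \<le> (real (N+1) powr (-e) - real (N+n+1) powr (-e)) / e" for n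
  proof (induction n)
    case 0 then show ?case by simp
  next
    case (Suc n)
    have "(\<Sum>j<Suc n. real (N + j + 2) powr (-1-e)) = (\<Sum>j<n. real (N + j + 2) powr (-1-e)) + real (N + n + 2) powr (-1-e)"
      by simp
    also have "\<dots> \<le> (real (N+1) powr (-e) - real (N+n+1) powr (-e)) / e + (real (N+n+1) powr (-e) - real (N+n+2) powr (-e)) / e"
      using Suc tm[of n] by linarith
    also have "\<dots> = (real (N+1) powr (-e) - real (N+Suc n+1) powr (-e)) / e"
      by (simp add: add_divide_distrib[symmetric] add.commute add.left_commute)
    finally show ?case .
  qed
  have part2: "(\<Sum>j<n. real (N + j + 2) powr (-1-e)) \<le> (1/e) * real (N+1) powr (-e)" for n
  proof -
    have "(real (N+1) powr (-e) - real (N+n+1) powr (-e)) / e \<le> (1/e) * real (N+1) powr (-e)"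
      using assms by (simp add: divide_right_mono)
    with part[of n] show ?thesis by linarith
  qed
  show sm: "summable (\<lambda>j. real (N + j + 2) powr (-1-e))"
  proof (rule bounded_imp_summable[where B="(1/e) * real (N+1) powr (-e)"])
    fix n
    show "(\<Sum>k\<le>n. real (N + k + 2) powr (-1-e)) \<le> (1/e) * real (N+1) powr (-e)"
      using part2[of "Suc n"] by (simp only: lessThan_Suc_atMost)
  qed simp
  show "(\<Sum>j. real (N + j + 2) powr (-1-e)) \<le> (1/e) * real (N+1) powr (-e)"
    by (rule suminf_le_const[OF sm part2])
qed

lemma ws_props:
  assumes "weight_sequence M" "m = quotients M"
  shows "\<forall>p. 0 < m p" "mono m"
proof -
  have Mpos: "\<And>p. 0 < M p" and lc: "\<And>p. p \<ge> 1 \<Longrightarrow> (M p)\<^sup>2 \<le> M (p - 1) * M (p + 1)"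
    using assms(1) unfolding weight_sequence_def by auto
  show "\<forall>p. 0 < m p" using Mpos assms(2) by (simp add: quotients_def)
  have "m p \<le> m (Suc p)" for p
  proof -
    have "(M (Suc p))\<^sup>2 \<le> M p * M (Suc (Suc p))" using lc[of "Suc p"] by simp
    hence "M (Suc p) * M (Suc p) \<le> M p * M (Suc (Suc p))" by (simp add: power2_eq_square)
    thus ?thesis using Mpos[of p] Mpos[of "Suc p"] assms(2)
      by (simp add: quotients_def divide_simps mult.commute)
  qed
  then show "mono m" by (simp add: incseq_SucI)
qed

lemma Q_imp_P2:
  fixes m :: "nat \<Rightarrow> real" and \<alpha> B :: real and k N :: nat
  assumes pos: "\<forall>p. 0 < m p" and mono: "mono m" and a: "0 < \<alpha>"
    and k: "2 \<le> k" and B: "B < real k powr \<alpha>" and ev: "\<forall>p\<ge>N. m (k*p) \<le> B * m p"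
  shows "\<exists>\<epsilon>. 0 < \<epsilon> \<and> \<epsilon> < \<alpha> \<and> almost_decreasing (\<lambda>p. m p / real p powr (\<alpha> - \<epsilon>))"
proof -
  define B' where "B' = max B (real k powr (\<alpha>/2))"
  have k1: "1 < real k" using k by simp
  have "real k powr (\<alpha>/2) < real k powr \<alpha>" using k1 a by (intro powr_less_mono) auto
  hence B'lt: "B' < real k powr \<alpha>" using B by (simp add: B'_def)
  have B'ge: "real k powr (\<alpha>/2) \<le> B'" by (simp add: B'_def)
  have "1 \<le> real k powr (\<alpha>/2)" using k1 a by (intro ge_one_powr_ge_zero) auto
  hence B'1: "1 \<le> B'" using B'ge by linarith
  define \<beta> where "\<beta> = log (real k) B'"
  have kb: "real k powr \<beta> = B'" unfolding \<beta>_def using k1 B'1 by simp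
  have blt: "\<beta> < \<alpha>"
  proof -
    have "log (real k) B' < log (real k) (real k powr \<alpha>)" using B'lt B'1 k1
      by (subst log_less_cancel_iff) auto
    thus ?thesis unfolding \<beta>_def using k1 by (simp add: log_powr_cancel)
  qed
  have bge: "\<alpha>/2 \<le> \<beta>"
  proof -
    have "log (real k) (real k powr (\<alpha>/2)) \<le> log (real k) B'" using B'ge k1 B'1
      by (subst log_le_cancel_iff) auto
    thus ?thesis unfolding \<beta>_def using k1 by (simp add: log_powr_cancel)
  qed
  have b0: "0 < \<beta>" using bge a by simp
  define N' where "N' = max N 1"
  have N'1: "1 \<le> N'" by (simp add: N'_def)
  have mmono: "\<And>p q. p \<le> q \<Longrightarrow> m p \<le> m q" using mono by (simp add: monoD)
  have claim: "\<forall>p\<ge>N'. \<forall>q. p \<le> q \<and> q < k^j * p \<longrightarrow> m q \<le> B' * (real q / real p) powr \<beta> * m p" for j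
  proof (induction j)
    case 0 then show ?case by auto
  next
    case (Suc j)
    show ?case
    proof (intro allI impI)
      fix p q assume p: "N' \<le> p" and q: "p \<le> q \<and> q < k ^ Suc j * p"
      have p1: "1 \<le> p" using p N'1 by simp
      have qp1: "1 \<le> (real q / real p) powr \<beta>"
        using q p1 b0 by (intro ge_one_powr_ge_zero) (auto simp: field_simps)
      show "m q \<le> B' * (real q / real p) powr \<beta> * m p"
      proof (cases "q < k * p")
        case True
        have "m q \<le> m (k*p)" using True by (intro mmono) simp
        also have "\<dots> \<le> B * m p" using ev p by (simp add: N'_def)
        also have "\<dots> \<le> B' * m p" using pos by (intro mult_right_mono) (auto simp: B'_def less_imp_le)
        also have "\<dots> \<le> B' * (real q / real p) powr \<beta> * m p"
          using qp1 pos B'1 by (simp add: mult_right_mono less_imp_le)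
        finally show ?thesis .
      next
        case False
        have kp: "N' \<le> k * p" using p k by (metis le_trans mult_le_mono1 mult_1 one_le_numeral
              numeral_le_iff semiring_norm(69) less_imp_le_nat less_le_trans one_less_numeral_iff)
        have "q < k^j * (k*p)" using q by (simp add: mult_ac)
        hence "m q \<le> B' * (real q / real (k*p)) powr \<beta> * m (k*p)"
          using Suc.IH kp False by auto
        also have "\<dots> \<le> B' * (real q / real (k*p)) powr \<beta> * (B' * m p)"
        proof -
          have "m (k*p) \<le> B' * m p"
            using ev p pos by (smt (verit, best) B'_def N'_def max.cobounded1 max.cobounded2
                 mult_right_mono order.trans)
          thus ?thesis using B'1 by (intro mult_left_mono) auto
        qed
        also have "\<dots> = B' * (real q / real p) powr \<beta> * m p"
        proof -
          have "(real q / real (k*p)) powr \<beta> * B' = (real q / real p) powr \<beta>"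
            unfolding kb[symmetric] using p1 k
            by (simp add: powr_mult[symmetric] field_simps)
          thus ?thesis by (simp add: mult_ac)
        qed
        finally show ?thesis .
      qed
    qed
  qed
  have big: "m q / real q powr \<beta> \<le> B' * (m p / real p powr \<beta>)" if "N' \<le> p" "p \<le> q" for p q
  proof -
    have "q < 2^q" by (rule less_exp)
    also have "\<dots> \<le> k^q" using k by (simp add: power_mono)
    also have "\<dots> \<le> k^q * p" using that N'1 by simp
    finally have "m q \<le> B' * (real q / real p) powr \<beta> * m p" using claim[of q] that by auto
    moreover have "(real q / real p) powr \<beta> = real q powr \<beta> / real p powr \<beta>"
      by (simp add: powr_divide)
    moreover have "0 < real q powr \<beta>" using that N'1 by simp
    ultimately show ?thesis by (simp add: field_simps)
  qed
  define D where "D = B' * (m N' / m 1) * real N' powr \<beta>"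
  have m1: "0 < m 1" using pos by simp
  have mN1: "1 \<le> m N' / m 1" using mmono[OF N'1] m1 by simp
  have Nb1: "1 \<le> real N' powr \<beta>" using N'1 b0 by (intro ge_one_powr_ge_zero) auto
  have xy: "1 * 1 \<le> (m N' / m 1) * real N' powr \<beta>" using mN1 Nb1 by (intro mult_mono) auto
  have D1: "B' * 1 \<le> D" unfolding D_def mult.assoc using B'1 xy by (intro mult_left_mono) auto
  hence D1: "B' \<le> D" by simp
  have Dpos: "0 < D" using D1 B'1 by simp
  have main: "m q / real q powr \<beta> \<le> D * (m p / real p powr \<beta>)" if "1 \<le> p" "p \<le> q" for p q
  proof (cases "N' \<le> p")
    case True
    have "m q / real q powr \<beta> \<le> B' * (m p / real p powr \<beta>)" using big True that by simp
    also have "\<dots> \<le> D * (m p / real p powr \<beta>)"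
      using D1 pos that by (intro mult_right_mono) (auto simp: less_imp_le)
    finally show ?thesis .
  next
    case False
    have pb: "real p powr \<beta> \<le> real N' powr \<beta>" using False that b0 by (intro powr_mono2) auto
    have pb1: "0 < real p powr \<beta>" using that by simp
    have mp1: "m 1 \<le> m p" using that mmono by simp
    have "D * (m p / real p powr \<beta>) \<ge> B' * m N'"
    proof -
      have "D * (m p / real p powr \<beta>) = B' * m N' * ((m p / m 1) * (real N' powr \<beta> / real p powr \<beta>))"
        unfolding D_def using m1 pb1 by (simp add: field_simps)
      moreover have "1 * 1 \<le> (m p / m 1) * (real N' powr \<beta> / real p powr \<beta>)"
        using mp1 m1 pb pb1 by (intro mult_mono) auto
      moreover have "0 \<le> B' * m N'" using B'1 pos by (simp add: less_imp_le)
      ultimately show ?thesis using mult_left_mono[of 1 "(m p / m 1) * (real N' powr \<beta> / real p powr \<beta>)" "B' * m N'"]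
        by simp
    qed
    moreover have "m q / real q powr \<beta> \<le> B' * m N'"
    proof (cases "N' \<le> q")
      case True
      have "m q / real q powr \<beta> \<le> B' * (m N' / real N' powr \<beta>)" using big[OF order.refl True] .
      also have "\<dots> \<le> B' * (m N' / 1)" using Nb1 B'1 pos N'1
        by (intro mult_left_mono divide_left_mono) (auto simp: less_imp_le)
      also have "\<dots> = B' * m N'" by simp
      finally show ?thesis .
    next
      case False
      have q1: "1 \<le> real q powr \<beta>" using that b0 by (intro ge_one_powr_ge_zero) auto
      have "m q / real q powr \<beta> \<le> m q / 1" using q1 pos that
        by (intro divide_left_mono) (auto simp: less_imp_le)
      hence "m q / real q powr \<beta> \<le> m q" by simp
      also have "\<dots> \<le> m N'" using False mmono by simp
      also have "\<dots> \<le> B' * m N'" using B'1 pos by simp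
      finally show ?thesis .
    qed
    ultimately show ?thesis by linarith
  qed
  show ?thesis
  proof (intro exI conjI)
    show "0 < \<alpha> - \<beta>" using blt by simp
    show "\<alpha> - \<beta> < \<alpha>" using b0 by simp
    show "almost_decreasing (\<lambda>p. m p / real p powr (\<alpha> - (\<alpha> - \<beta>)))"
      unfolding almost_decreasing_def
    proof (intro exI[of _ "1/D"] conjI allI impI)
      show "0 < 1/D" using Dpos by simp
      fix p q :: nat assume "1 \<le> p" "p \<le> q"
      from main[OF this] Dpos have "1/D * (m q / real q powr \<beta>) \<le> 1/D * (D * (m p / real p powr \<beta>))"
        by (intro mult_left_mono) auto
      with Dpos show "1 / D * (m q / real q powr (\<alpha> - (\<alpha> - \<beta>))) \<le> m p / real p powr (\<alpha> - (\<alpha> - \<beta>))"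
        by simp
    qed
  qed
qed

lemma P2_imp_R:
  fixes m :: "nat \<Rightarrow> real" and \<alpha> \<epsilon> :: real
  assumes pos: "\<forall>p. 0 < m p" and mono: "mono m"
    and e: "0 < \<epsilon>" "\<epsilon> < \<alpha>" and ad: "almost_decreasing (\<lambda>p. m p / real p powr (\<alpha> - \<epsilon>))"
  shows "\<exists>\<beta> D. 0 < \<beta> \<and> \<beta> < \<alpha> \<and> 1 \<le> D \<and>
           (\<forall>k p. k \<le> p \<longrightarrow> m p * real (k+1) powr \<beta> \<le> D * real (p+1) powr \<beta> * m k)"
proof -
  define \<beta> where "\<beta> = \<alpha> - \<epsilon>"
  have b0: "0 < \<beta>" "\<beta> < \<alpha>" using e by (auto simp: \<beta>_def)
  obtain c where c0: "0 < c" and cq: "\<And>p q. 1 \<le> p \<Longrightarrow> p \<le> q \<Longrightarrow> c * (m q / real q powr \<beta>) \<le> m p / real p powr \<beta>"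
    using ad unfolding almost_decreasing_def \<beta>_def by blast
  have mmono: "\<And>p q. p \<le> q \<Longrightarrow> m p \<le> m q" using mono by (simp add: monoD)
  have c1: "c \<le> 1"
  proof -
    have "c * m 1 \<le> 1 * m 1" using cq[of 1 1] by simp
    thus ?thesis using pos by (meson mult_le_cancel_right_pos)
  qed
  define r where "r = m 1 / m 0"
  have r1: "1 \<le> r" unfolding r_def using pos mmono[of 0 1] by simp
  have m1: "m 1 = r * m 0" unfolding r_def using pos[rule_format, of 0] by simp
  define D where "D = 2 powr \<beta> * r / c"
  have tb: "1 \<le> 2 powr \<beta>" using b0 by (intro ge_one_powr_ge_zero) auto
  have rc: "1 \<le> r / c" using r1 c0 c1 by (simp add: field_simps)
  have Deq: "D = 2 powr \<beta> * (r / c)" unfolding D_def by simp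
  have "1 * 1 \<le> 2 powr \<beta> * (r / c)" using tb rc by (intro mult_mono) auto
  hence D1: "1 \<le> D" using Deq by simp
  have "1 * (r / c) \<le> 2 powr \<beta> * (r / c)" using tb rc by (intro mult_right_mono) auto
  hence Dr: "r / c \<le> D" using Deq by simp
  have "(2 powr \<beta> / c) * 1 \<le> (2 powr \<beta> / c) * r" using r1 c0 by (intro mult_left_mono) auto
  hence Dt: "2 powr \<beta> / c \<le> D" unfolding D_def by simp
  have key1: "m p * real k powr \<beta> \<le> (1/c) * real p powr \<beta> * m k" if "1 \<le> k" "k \<le> p" for k p
  proof -
    have "c * (m p / real p powr \<beta>) \<le> m k / real k powr \<beta>" using cq that by simp
    moreover have "0 < real p powr \<beta>" "0 < real k powr \<beta>" using that by auto
    ultimately show ?thesis using c0 by (simp add: field_simps)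
  qed
  have main: "m p * real (k+1) powr \<beta> \<le> D * real (p+1) powr \<beta> * m k" if "k \<le> p" for k p
  proof (cases "k = 0")
    case False
    hence k1: "1 \<le> k" by simp
    have "m p * real (k+1) powr \<beta> \<le> m p * (2 powr \<beta> * real k powr \<beta>)"
    proof -
      have "real (k+1) powr \<beta> \<le> (2 * real k) powr \<beta>" using k1 b0 by (intro powr_mono2) auto
      thus ?thesis using pos by (simp add: powr_mult less_imp_le)
    qed
    also have "\<dots> = 2 powr \<beta> * (m p * real k powr \<beta>)" by simp
    also have "\<dots> \<le> 2 powr \<beta> * ((1/c) * real p powr \<beta> * m k)"
      using key1[OF k1 that] by (intro mult_left_mono) auto
    also have "\<dots> \<le> 2 powr \<beta> * ((1/c) * real (p+1) powr \<beta> * m k)"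
    proof -
      have "real p powr \<beta> \<le> real (p+1) powr \<beta>" using b0 by (intro powr_mono2) auto
      thus ?thesis using c0 pos by (intro mult_left_mono mult_right_mono) (auto simp: less_imp_le)
    qed
    also have "\<dots> = (2 powr \<beta> / c) * (real (p+1) powr \<beta> * m k)" by simp
    also have "\<dots> \<le> D * (real (p+1) powr \<beta> * m k)"
      using Dt pos by (intro mult_right_mono) (auto simp: less_imp_le)
    finally show ?thesis by (simp add: mult_ac)
  next
    case True
    show ?thesis
    proof (cases "p = 0")
      case True
      then show ?thesis using \<open>k = 0\<close> D1 pos by (simp add: less_imp_le)
    next
      case False
      hence p1: "1 \<le> p" by simp
      have "m p = m p * real 1 powr \<beta>" by simp
      also have "\<dots> \<le> (1/c) * real p powr \<beta> * m 1" using key1[of 1 p] p1 by simp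
      also have "\<dots> = (r/c) * (real p powr \<beta> * m 0)" using m1 by simp
      also have "\<dots> \<le> D * (real (p+1) powr \<beta> * m 0)"
      proof -
        have "real p powr \<beta> \<le> real (p+1) powr \<beta>" using b0 by (intro powr_mono2) auto
        hence "real p powr \<beta> * m 0 \<le> real (p+1) powr \<beta> * m 0" using pos by (simp add: less_imp_le)
        thus ?thesis using Dr rc pos by (intro mult_mono) (auto simp: less_imp_le)
      qed
      finally show ?thesis using \<open>k = 0\<close> by (simp add: mult_ac)
    qed
  qed
  show ?thesis using b0 D1 main by blast
qed

lemma R_imp_P1:
  fixes m :: "nat \<Rightarrow> real" and \<alpha> \<beta> D :: real
  assumes pos: "\<forall>p. 0 < m p" and b: "0 < \<beta>" "\<beta> < \<alpha>" and D1: "1 \<le> D"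
    and R: "\<forall>k p. k \<le> p \<longrightarrow> m p * real (k+1) powr \<beta> \<le> D * real (p+1) powr \<beta> * m k"
  shows "\<exists>C>0. \<forall>p. (\<Sum>k\<le>p. real (k + 1) powr (\<alpha> - 1) / m k) \<le> C * real (p + 1) powr \<alpha> / m p"
proof -
  define \<epsilon> where "\<epsilon> = \<alpha> - \<beta>"
  have e0: "0 < \<epsilon>" using b by (simp add: \<epsilon>_def)
  have tm: "real (k+1) powr (\<alpha>-1) / m k \<le> (D * real (p+1) powr \<beta> / m p) * real (k+1) powr (\<epsilon>-1)"
    if "k \<le> p" for k p
  proof -
    have sp: "real (k+1) powr (\<alpha>-1) = real (k+1) powr (\<epsilon>-1) * real (k+1) powr \<beta>"
      by (simp add: powr_add[symmetric] \<epsilon>_def)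
    have "m p * real (k+1) powr \<beta> \<le> D * real (p+1) powr \<beta> * m k" using R that by blast
    hence "real (k+1) powr \<beta> / m k \<le> D * real (p+1) powr \<beta> / m p"
      using pos by (simp add: divide_simps mult_ac)
    hence "real (k+1) powr (\<epsilon>-1) * (real (k+1) powr \<beta> / m k) \<le> real (k+1) powr (\<epsilon>-1) * (D * real (p+1) powr \<beta> / m p)"
      by (intro mult_left_mono) auto
    thus ?thesis unfolding sp by (simp add: mult_ac)
  qed
  show ?thesis
  proof (intro exI[of _ "D * (1 + 1/\<epsilon>)"] conjI allI)
    have "0 < 1/\<epsilon>" using e0 by simp
    hence "0 < 1 + 1/\<epsilon>" by linarith
    thus "0 < D * (1 + 1/\<epsilon>)" using D1 by simp
    fix p
    have "(\<Sum>k\<le>p. real (k + 1) powr (\<alpha> - 1) / m k) \<le> (\<Sum>k\<le>p. (D * real (p+1) powr \<beta> / m p) * real (k+1) powr (\<epsilon>-1))"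
      by (rule sum_mono) (use tm in auto)
    also have "\<dots> = (D * real (p+1) powr \<beta> / m p) * (\<Sum>k<Suc p. real (k+1) powr (\<epsilon>-1))"
      by (simp add: sum_distrib_left lessThan_Suc_atMost)
    also have "\<dots> \<le> (D * real (p+1) powr \<beta> / m p) * ((1 + 1/\<epsilon>) * real (Suc p) powr \<epsilon>)"
      using sum_powr_upper[OF e0, of "Suc p"] pos D1 by (intro mult_left_mono) (auto simp: less_imp_le)
    also have "\<dots> = D * (1 + 1/\<epsilon>) * (real (p+1) powr \<beta> * real (p+1) powr \<epsilon>) / m p"
      by simp
    also have "real (p+1) powr \<beta> * real (p+1) powr \<epsilon> = real (p+1) powr \<alpha>"
      by (simp add: powr_add[symmetric] \<epsilon>_def)
    finally show "(\<Sum>k\<le>p. real (k + 1) powr (\<alpha> - 1) / m k) \<le> D * (1 + 1/\<epsilon>) * real (p + 1) powr \<alpha> / m p" .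
  qed
qed

lemma R_kp:
  fixes m :: "nat \<Rightarrow> real" and \<beta> D :: real
  assumes pos: "\<forall>p. 0 < m p" and b: "0 < \<beta>" and D1: "1 \<le> D"
    and R: "\<forall>k p. k \<le> p \<longrightarrow> m p * real (k+1) powr \<beta> \<le> D * real (p+1) powr \<beta> * m k"
    and k: "1 \<le> k"
  shows "m (k*p) \<le> D * real k powr \<beta> * m p"
proof -
  have "p \<le> k*p" using k by simp
  hence "m (k*p) * real (p+1) powr \<beta> \<le> D * real (k*p+1) powr \<beta> * m p" using R by blast
  also have "\<dots> \<le> D * (real k powr \<beta> * real (p+1) powr \<beta>) * m p"
  proof -
    have "real (k*p+1) powr \<beta> \<le> (real k * real (p+1)) powr \<beta>" using k b
      by (intro powr_mono2) (auto simp: algebra_simps)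
    thus ?thesis using D1 pos by (intro mult_right_mono mult_left_mono) (auto simp: powr_mult less_imp_le)
  qed
  finally have "m (k*p) * real (p+1) powr \<beta> \<le> (D * real k powr \<beta> * m p) * real (p+1) powr \<beta>"
    by (simp add: mult_ac)
  thus ?thesis by simp
qed

lemma R_imp_P4:
  fixes m :: "nat \<Rightarrow> real" and \<alpha> \<beta> D :: real
  assumes pos: "\<forall>p. 0 < m p" and b: "0 < \<beta>" "\<beta> < \<alpha>" and D1: "1 \<le> D"
    and R: "\<forall>k p. k \<le> p \<longrightarrow> m p * real (k+1) powr \<beta> \<le> D * real (p+1) powr \<beta> * m k"
  shows "(\<lambda>k. limsup (\<lambda>p. ereal (m (k * p) / (real k powr \<alpha> * m p)))) \<longlonglongrightarrow> 0"
proof (rule tendsto_sandwich[where f="\<lambda>k. 0" and h="\<lambda>k. ereal (D * real k powr (\<beta> - \<alpha>))"])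
  show "\<forall>\<^sub>F k in sequentially. 0 \<le> limsup (\<lambda>p. ereal (m (k * p) / (real k powr \<alpha> * m p)))"
    by (intro always_eventually allI le_Limsup) (use pos in \<open>auto simp: less_imp_le\<close>)
  show "\<forall>\<^sub>F k in sequentially. limsup (\<lambda>p. ereal (m (k * p) / (real k powr \<alpha> * m p))) \<le> ereal (D * real k powr (\<beta> - \<alpha>))"
    unfolding eventually_sequentially
  proof (intro exI[of _ 1] allI impI Limsup_bounded always_eventually)
    fix k p :: nat assume k: "1 \<le> k"
    have "m (k*p) \<le> D * real k powr \<beta> * m p" using R_kp[OF pos b(1) D1 R k] .
    hence "m (k*p) / (real k powr \<alpha> * m p) \<le> D * real k powr \<beta> * m p / (real k powr \<alpha> * m p)"
      using pos k by (intro divide_right_mono) (auto intro!: mult_nonneg_nonneg simp: less_imp_le)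
    also have "\<dots> = D * real k powr (\<beta> - \<alpha>)" using pos[rule_format, of p] k by (simp add: powr_diff)
    finally show "ereal (m (k * p) / (real k powr \<alpha> * m p)) \<le> ereal (D * real k powr (\<beta> - \<alpha>))" by simp
  qed
  show "(\<lambda>k. 0) \<longlonglongrightarrow> (0::ereal)" by simp
  have "(\<lambda>k. D * real k powr (\<beta> - \<alpha>)) \<longlonglongrightarrow> D * 0"
    using b by (intro tendsto_mult tendsto_const tendsto_neg_powr filterlim_real_sequentially) auto
  hence "(\<lambda>k. ereal (D * real k powr (\<beta> - \<alpha>))) \<longlonglongrightarrow> ereal 0" by (intro tendsto_ereal) simp
  thus "(\<lambda>k. ereal (D * real k powr (\<beta> - \<alpha>))) \<longlonglongrightarrow> 0" by (simp add: zero_ereal_def)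
qed

lemma R_imp_P3:
  fixes m :: "nat \<Rightarrow> real" and \<alpha> \<beta> D :: real
  assumes pos: "\<forall>p. 0 < m p" and b: "0 < \<beta>" "\<beta> < \<alpha>" and D1: "1 \<le> D"
    and R: "\<forall>k p. k \<le> p \<longrightarrow> m p * real (k+1) powr \<beta> \<le> D * real (p+1) powr \<beta> * m k"
  shows "\<exists>h. seq_equiv h m \<and>
                   (\<forall>p. real (Suc p + 1) powr (- \<alpha>) * h (Suc p) \<le> real (p + 1) powr (- \<alpha>) * h p) \<and>
                   (SUP p\<in>{1..}. ereal (h (2 * p) / h p)) < ereal (2 powr \<alpha>)"
proof -
  define f where "f q = m q / real (q+1) powr \<beta>" for q
  define g where "g p = (SUP q\<in>{p..}. f q)" for p
  have bdd: "bdd_above (f ` {p..})" for p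
  proof (rule bdd_aboveI2)
    fix q
    have "m q * real (0+1) powr \<beta> \<le> D * real (q+1) powr \<beta> * m 0" using R by blast
    thus "f q \<le> D * m 0" unfolding f_def by (simp add: divide_simps mult_ac)
  qed
  have fle: "f q \<le> D * f p" if "p \<le> q" for p q
  proof -
    have "m q * real (p+1) powr \<beta> \<le> D * real (q+1) powr \<beta> * m p" using R that by blast
    thus ?thesis unfolding f_def by (simp add: divide_simps mult_ac)
  qed
  have fpos: "0 < f p" for p unfolding f_def using pos by simp
  have glo: "f p \<le> g p" for p unfolding g_def by (rule cSUP_upper[OF _ bdd]) simp
  have ghi: "g p \<le> D * f p" for p unfolding g_def by (rule cSUP_least) (auto intro: fle)
  have gmono: "g (Suc p) \<le> g p" for p unfolding g_def
    by (rule cSUP_subset_mono) (auto intro: bdd)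
  have gpos: "0 < g p" for p using glo[of p] fpos[of p] by linarith
  define h where "h p = real (p+1) powr \<beta> * g p" for p
  have hlo: "m p \<le> h p" for p
    using glo[of p] unfolding h_def f_def by (simp add: divide_simps mult_ac)
  have hhi: "h p \<le> D * m p" for p
    using ghi[of p] unfolding h_def f_def by (simp add: divide_simps mult_ac)
  have hpos: "0 < h p" for p unfolding h_def using gpos by simp
  have gmono2: "g q \<le> g p" if "p \<le> q" for p q
    using that
  proof (induction q)
    case 0 then show ?case by simp
  next
    case (Suc q)
    show ?case
    proof (cases "p = Suc q")
      case False
      hence "p \<le> q" using Suc.prems by simp
      thus ?thesis using Suc.IH gmono[of q] by linarith
    qed simp
  qed
  show ?thesis
  proof (intro exI[of _ h] conjI allI)
    show "seq_equiv h m" unfolding seq_equiv_def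
    proof (intro exI[of _ D] conjI allI)
      fix p
      have "m p / D \<le> m p" using D1 pos by (simp add: divide_simps less_imp_le)
      thus "m p / D \<le> h p" using hlo[of p] by linarith
      show "h p \<le> D * m p" by (rule hhi)
    qed (rule D1)
    fix p
    have "real (Suc p + 1) powr (- \<alpha>) * h (Suc p) = real (Suc p + 1) powr (\<beta> - \<alpha>) * g (Suc p)"
      unfolding h_def by (simp add: powr_add[symmetric] mult.assoc[symmetric])
    also have "\<dots> \<le> real (p + 1) powr (\<beta> - \<alpha>) * g p"
    proof (rule mult_mono)
      show "real (Suc p + 1) powr (\<beta> - \<alpha>) \<le> real (p + 1) powr (\<beta> - \<alpha>)"
        using b by (intro powr_mono2') auto
    qed (use gmono gpos in \<open>auto simp: less_imp_le\<close>)
    also have "\<dots> = real (p + 1) powr (- \<alpha>) * h p"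
      unfolding h_def by (simp add: powr_add[symmetric] mult.assoc[symmetric])
    finally show "real (Suc p + 1) powr (- \<alpha>) * h (Suc p) \<le> real (p + 1) powr (- \<alpha>) * h p" .
  next
    have "(SUP p\<in>{1..}. ereal (h (2 * p) / h p)) \<le> ereal (2 powr \<beta>)"
    proof (rule SUP_least)
      fix p :: nat assume "p \<in> {1..}"
      have "h (2*p) = real (2*p+1) powr \<beta> * g (2*p)" by (simp add: h_def)
      also have "\<dots> \<le> (2 * real (p+1)) powr \<beta> * g p"
        using b gpos gmono2[of p "2*p"] by (intro mult_mono powr_mono2) (auto simp: less_imp_le)
      also have "\<dots> = 2 powr \<beta> * h p"
      proof -
        have "(2 * real (p+1)) powr \<beta> = 2 powr \<beta> * real (p+1) powr \<beta>" using powr_mult[of 2 "real (p+1)" \<beta>] by simp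
        thus ?thesis by (simp add: h_def)
      qed
      finally have "h (2*p) / h p \<le> 2 powr \<beta>" using hpos[of p] by (simp add: divide_simps)
      thus "ereal (h (2 * p) / h p) \<le> ereal (2 powr \<beta>)" by simp
    qed
    also have "\<dots> < ereal (2 powr \<alpha>)" using b by simp
    finally show "(SUP p\<in>{1..}. ereal (h (2 * p) / h p)) < ereal (2 powr \<alpha>)" .
  qed
qed

lemma R_imp_P8:
  fixes m :: "nat \<Rightarrow> real" and \<alpha> \<beta> D :: real
  assumes pos: "\<forall>p. 0 < m p" and b: "0 < \<beta>" "\<beta> < \<alpha>" and D1: "1 \<le> D"
    and R: "\<forall>k p. k \<le> p \<longrightarrow> m p * real (k+1) powr \<beta> \<le> D * real (p+1) powr \<beta> * m k"
  shows "\<exists>C>0. \<forall>p. summable (\<lambda>j. m (p + 1 + j) / real (p + 1 + j + 1) powr (1 + \<alpha>)) \<and>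
                   (\<Sum>j. m (p + 1 + j) / real (p + 1 + j + 1) powr (1 + \<alpha>)) \<le> C * m p / real (p + 1) powr \<alpha>"
proof (intro exI[of _ "D / (\<alpha> - \<beta>)"] conjI allI)
  define \<epsilon> where "\<epsilon> = \<alpha> - \<beta>"
  have e0: "0 < \<epsilon>" using b by (simp add: \<epsilon>_def)
  show "0 < D / (\<alpha> - \<beta>)" using D1 b by simp
  fix p
  define K where "K = D * m p / real (p+1) powr \<beta>"
  have K0: "0 \<le> K" unfolding K_def using D1 pos by (simp add: less_imp_le)
  have bnd: "m (p + 1 + j) / real (p + 1 + j + 1) powr (1 + \<alpha>) \<le> K * real (p + j + 2) powr (-1-\<epsilon>)" for j
  proof -
    define q where "q = p + 1 + j"
    have qe: "real (p + 1 + j + 1) = real (q+1)" "real (p + j + 2) = real (q+1)" by (simp_all add: q_def)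
    have "p \<le> q" by (simp add: q_def)
    hence "m q * real (p+1) powr \<beta> \<le> D * real (q+1) powr \<beta> * m p" using R by blast
    hence mq: "m q \<le> K * real (q+1) powr \<beta>" unfolding K_def by (simp add: divide_simps mult_ac)
    have "m q / real (q+1) powr (1 + \<alpha>) \<le> K * real (q+1) powr \<beta> / real (q+1) powr (1 + \<alpha>)"
      using mq by (intro divide_right_mono) auto
    also have "\<dots> = K * real (q+1) powr (\<beta> - (1 + \<alpha>))" by (simp add: powr_diff)
    also have "\<beta> - (1 + \<alpha>) = -1-\<epsilon>" by (simp add: \<epsilon>_def)
    finally show ?thesis unfolding qe q_def[symmetric] .
  qed
  have nn: "0 \<le> m (p + 1 + j) / real (p + 1 + j + 1) powr (1 + \<alpha>)" for j using pos by (simp add: less_imp_le)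
  have sg: "summable (\<lambda>j. K * real (p + j + 2) powr (-1-\<epsilon>))"
    using tail_powr(1)[OF e0, of p] by (rule summable_mult)
  show sf: "summable (\<lambda>j. m (p + 1 + j) / real (p + 1 + j + 1) powr (1 + \<alpha>))"
  proof (rule summable_comparison_test'[OF sg])
    fix j :: nat
    show "norm (m (p + 1 + j) / real (p + 1 + j + 1) powr (1 + \<alpha>)) \<le> K * real (p + j + 2) powr (-1-\<epsilon>)"
      using bnd[of j] nn[of j] by (simp only: real_norm_def abs_of_nonneg)
  qed
  have "(\<Sum>j. m (p + 1 + j) / real (p + 1 + j + 1) powr (1 + \<alpha>)) \<le> (\<Sum>j. K * real (p + j + 2) powr (-1-\<epsilon>))"
    by (rule suminf_le[OF bnd sf sg])
  also have "\<dots> = K * (\<Sum>j. real (p + j + 2) powr (-1-\<epsilon>))"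
    by (rule suminf_mult[OF tail_powr(1)[OF e0]])
  also have "\<dots> \<le> K * ((1/\<epsilon>) * real (p+1) powr (-\<epsilon>))"
    by (rule mult_left_mono[OF tail_powr(2)[OF e0] K0])
  also have "\<dots> = D / \<epsilon> * m p * (real (p+1) powr (-\<epsilon>) / real (p+1) powr \<beta>)"
    unfolding K_def by simp
  also have "real (p+1) powr (-\<epsilon>) / real (p+1) powr \<beta> = 1 / real (p+1) powr \<alpha>"
    by (simp add: \<epsilon>_def powr_minus_divide powr_add[symmetric] divide_simps)
  finally show "(\<Sum>j. m (p + 1 + j) / real (p + 1 + j + 1) powr (1 + \<alpha>)) \<le> D / (\<alpha> - \<beta>) * m p / real (p + 1) powr \<alpha>"
    by (simp add: \<epsilon>_def)
qed

lemma R_ratio: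
  fixes m :: "nat \<Rightarrow> real" and \<beta> D x t :: real
  assumes pos: "\<forall>p. 0 < m p" and b: "0 < \<beta>" and D1: "1 \<le> D"
    and R: "\<forall>k p. k \<le> p \<longrightarrow> m p * real (k+1) powr \<beta> \<le> D * real (p+1) powr \<beta> * m k"
    and x: "2 \<le> x" and t: "1 \<le> t"
  shows "m (nat \<lfloor>t * x\<rfloor> - 1) / (t powr \<beta> * m (nat \<lfloor>x\<rfloor> - 1)) \<le> D * 2 powr \<beta>"
proof -
  define P where "P = nat \<lfloor>x\<rfloor>"
  define Q where "Q = nat \<lfloor>t * x\<rfloor>"
  have fx: "(2::int) \<le> \<lfloor>x\<rfloor>" using x by (simp add: le_floor_iff)
  have xtx: "x \<le> t * x" using x t by simp
  have ftx: "\<lfloor>x\<rfloor> \<le> \<lfloor>t * x\<rfloor>" using xtx by (rule floor_mono)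
  have P2: "2 \<le> P" using fx unfolding P_def by linarith
  have rP: "real P = of_int \<lfloor>x\<rfloor>" using fx by (simp add: P_def)
  have ftx0: "0 \<le> \<lfloor>t * x\<rfloor>" using fx ftx by linarith
  have rQ: "real Q = of_int \<lfloor>t * x\<rfloor>" using ftx0 by (simp add: Q_def)
  have PQ: "P \<le> Q" using ftx fx unfolding P_def Q_def by linarith
  have Px: "x / 2 \<le> real P" using rP x by linarith
  have Qx: "real Q \<le> t * x" using rQ by simp
  have xp: "0 < x" using x by simp
  have R': "m (Q-1) * real P powr \<beta> \<le> D * real Q powr \<beta> * m (P-1)"
  proof -
    have "P - 1 \<le> Q - 1" using PQ by simp
    hence "m (Q-1) * real (P-1+1) powr \<beta> \<le> D * real (Q-1+1) powr \<beta> * m (P-1)" using R by blast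
    moreover have "P - 1 + 1 = P" "Q - 1 + 1 = Q" using P2 PQ by auto
    ultimately show ?thesis by simp
  qed
  have "m (Q-1) * ((x/2) powr \<beta>) \<le> m (Q-1) * real P powr \<beta>"
    using Px xp b pos by (intro mult_left_mono powr_mono2) (auto simp: less_imp_le)
  also have "\<dots> \<le> D * real Q powr \<beta> * m (P-1)" by (rule R')
  also have "\<dots> \<le> D * (t * x) powr \<beta> * m (P-1)"
    using Qx b pos D1 by (intro mult_right_mono mult_left_mono powr_mono2) (auto simp: less_imp_le)
  finally have A: "m (Q-1) * ((x/2) powr \<beta>) \<le> D * (t * x) powr \<beta> * m (P-1)" .
  have e1: "(x/2) powr \<beta> = x powr \<beta> / 2 powr \<beta>" using xp by (simp add: powr_divide)
  have e2: "(t * x) powr \<beta> = t powr \<beta> * x powr \<beta>" using xp t by (simp add: powr_mult)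
  have xb: "0 < x powr \<beta>" using xp by simp
  have tb: "0 < t powr \<beta>" using t by simp
  have "m (Q-1) \<le> (D * 2 powr \<beta>) * (t powr \<beta> * m (P-1))"
  proof -
    from A have "m (Q-1) * x powr \<beta> / 2 powr \<beta> \<le> D * t powr \<beta> * x powr \<beta> * m (P-1)"
      unfolding e1 e2 by (simp add: mult_ac)
    hence "m (Q-1) * x powr \<beta> \<le> (D * 2 powr \<beta> * t powr \<beta> * m (P-1)) * x powr \<beta>"
      by (simp add: divide_simps mult_ac)
    hence "m (Q-1) \<le> D * 2 powr \<beta> * t powr \<beta> * m (P-1)" using xb by simp
    thus ?thesis by (simp add: mult_ac)
  qed
  hence "m (Q-1) / (t powr \<beta> * m (P-1)) \<le> D * 2 powr \<beta>"
    using tb pos by (simp add: divide_simps)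
  thus ?thesis by (simp add: P_def Q_def)
qed

lemma R_imp_P7:
  fixes m :: "nat \<Rightarrow> real" and \<alpha> \<beta> D :: real
  assumes pos: "\<forall>p. 0 < m p" and b: "0 < \<beta>" "\<beta> < \<alpha>" and D1: "1 \<le> D"
    and R: "\<forall>k p. k \<le> p \<longrightarrow> m p * real (k+1) powr \<beta> \<le> D * real (p+1) powr \<beta> * m k"
  shows "alpha_index m < ereal \<alpha>"
proof -
  let ?f = "\<lambda>x::real. m (nat \<lfloor>x\<rfloor> - 1)"
  let ?S = "{ereal a | a. \<exists>C>0. \<forall>\<Lambda>>1.
      Limsup at_top (\<lambda>x. SUP t\<in>{1..\<Lambda>}. ereal (?f (t * x) / (t powr a * ?f x))) \<le> ereal C}"
  have "ereal \<beta> \<in> ?S"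
  proof (intro CollectI exI conjI allI impI)
    show "ereal \<beta> = ereal \<beta>" ..
    show "0 < D * 2 powr \<beta>" using D1 by simp
    fix \<Lambda> :: real assume "1 < \<Lambda>"
    show "Limsup at_top (\<lambda>x. SUP t\<in>{1..\<Lambda>}. ereal (?f (t * x) / (t powr \<beta> * ?f x))) \<le> ereal (D * 2 powr \<beta>)"
    proof (rule Limsup_bounded)
      show "\<forall>\<^sub>F x in at_top. (SUP t\<in>{1..\<Lambda>}. ereal (?f (t * x) / (t powr \<beta> * ?f x))) \<le> ereal (D * 2 powr \<beta>)"
        unfolding eventually_at_top_linorder
      proof (intro exI[of _ 2] allI impI SUP_least)
        fix x t :: real assume "2 \<le> x" "t \<in> {1..\<Lambda>}"
        then show "ereal (?f (t * x) / (t powr \<beta> * ?f x)) \<le> ereal (D * 2 powr \<beta>)"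
          using R_ratio[OF pos b(1) D1 R, of x t] by simp
      qed
    qed
  qed
  hence "Inf ?S \<le> ereal \<beta>" by (rule Inf_lower)
  also have "\<dots> < ereal \<alpha>" using b by simp
  finally show ?thesis unfolding alpha_index_def upper_matuszewska_def .
qed

definition Qcond :: "(nat \<Rightarrow> real) \<Rightarrow> real \<Rightarrow> bool" where
  "Qcond m \<alpha> \<longleftrightarrow> (\<exists>k B N. 2 \<le> k \<and> B < real k powr \<alpha> \<and> (\<forall>p\<ge>N. m (k*p) \<le> B * m p))"

lemma P6_imp_P5:
  fixes m :: "nat \<Rightarrow> real" and \<alpha> :: real
  assumes pos: "\<forall>p. 0 < m p"
    and P6: "\<forall>\<theta>. 0 < \<theta> \<and> \<theta> < 1 \<longrightarrow> (\<exists>k::nat. 2 \<le> k \<and> (\<forall>p\<ge>1. m (k * p) \<le> \<theta> * real k powr \<alpha> * m p))"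
  shows "\<exists>k::nat. 2 \<le> k \<and> limsup (\<lambda>p. ereal (m (k * p) / m p)) < ereal (real k powr \<alpha>)"
proof -
  obtain k :: nat where k: "2 \<le> k" and kb: "\<forall>p\<ge>1. m (k * p) \<le> 1/2 * real k powr \<alpha> * m p"
    using P6[rule_format, of "1/2"] by auto
  have "limsup (\<lambda>p. ereal (m (k * p) / m p)) \<le> ereal (1/2 * real k powr \<alpha>)"
  proof (rule Limsup_bounded)
    show "\<forall>\<^sub>F p in sequentially. ereal (m (k * p) / m p) \<le> ereal (1/2 * real k powr \<alpha>)"
      unfolding eventually_sequentially
    proof (intro exI[of _ 1] allI impI)
      fix p :: nat assume "1 \<le> p"
      hence "m (k * p) \<le> 1/2 * real k powr \<alpha> * m p" using kb by blast
      thus "ereal (m (k * p) / m p) \<le> ereal (1/2 * real k powr \<alpha>)" using pos[rule_format, of p]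
        by (simp add: divide_simps)
    qed
  qed
  also have "\<dots> < ereal (real k powr \<alpha>)" using k by simp
  finally show ?thesis using k by blast
qed

lemma P5_imp_Q:
  fixes m :: "nat \<Rightarrow> real" and \<alpha> :: real
  assumes pos: "\<forall>p. 0 < m p"
    and P5: "\<exists>k::nat. 2 \<le> k \<and> limsup (\<lambda>p. ereal (m (k * p) / m p)) < ereal (real k powr \<alpha>)"
  shows "Qcond m \<alpha>"
proof -
  obtain k :: nat where k: "2 \<le> k" and l: "limsup (\<lambda>p. ereal (m (k * p) / m p)) < ereal (real k powr \<alpha>)"
    using P5 by blast
  obtain B where B1: "limsup (\<lambda>p. ereal (m (k * p) / m p)) < ereal B" and B2: "ereal B < ereal (real k powr \<alpha>)"
    using ereal_dense2[OF l] by blast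
  have "\<forall>\<^sub>F p in sequentially. ereal (m (k * p) / m p) < ereal B" using Limsup_lessD[OF B1] .
  then obtain N where N: "\<And>p. p \<ge> N \<Longrightarrow> m (k * p) / m p < B" unfolding eventually_sequentially by auto
  have "\<forall>p\<ge>N. m (k*p) \<le> B * m p"
  proof (intro allI impI)
    fix p assume "N \<le> p"
    hence "m (k * p) / m p < B" by (rule N)
    thus "m (k*p) \<le> B * m p" using pos[rule_format, of p] by (simp add: divide_simps)
  qed
  thus ?thesis unfolding Qcond_def using k B2 by auto
qed

lemma P4_imp_Q:
  fixes m :: "nat \<Rightarrow> real" and \<alpha> :: real
  assumes pos: "\<forall>p. 0 < m p" and a: "0 < \<alpha>"
    and P4: "(\<lambda>k. limsup (\<lambda>p. ereal (m (k * p) / (real k powr \<alpha> * m p)))) \<longlonglongrightarrow> 0"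
  shows "Qcond m \<alpha>"
proof -
  have "\<forall>\<^sub>F k in sequentially. limsup (\<lambda>p. ereal (m (k * p) / (real k powr \<alpha> * m p))) < ereal (1/2)"
    using order_tendstoD(2)[OF P4, of "ereal (1/2)"] by (simp add: zero_ereal_def)
  then obtain N where N: "\<And>k. k \<ge> N \<Longrightarrow> limsup (\<lambda>p. ereal (m (k * p) / (real k powr \<alpha> * m p))) < ereal (1/2)"
    unfolding eventually_sequentially by auto
  define k where "k = max N 2"
  have k: "2 \<le> k" "N \<le> k" by (auto simp: k_def)
  have "\<forall>\<^sub>F p in sequentially. ereal (m (k * p) / (real k powr \<alpha> * m p)) < ereal (1/2)"
    using Limsup_lessD[OF N[OF k(2)]] .
  then obtain N' where N': "\<And>p. p \<ge> N' \<Longrightarrow> m (k * p) / (real k powr \<alpha> * m p) < 1/2"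
    unfolding eventually_sequentially by auto
  have kp: "0 < real k powr \<alpha>" using k by simp
  have "\<forall>p\<ge>N'. m (k*p) \<le> (real k powr \<alpha> / 2) * m p"
  proof (intro allI impI)
    fix p assume "N' \<le> p"
    hence "m (k * p) / (real k powr \<alpha> * m p) < 1/2" by (rule N')
    thus "m (k*p) \<le> (real k powr \<alpha> / 2) * m p" using pos[rule_format, of p] kp by (simp add: divide_simps)
  qed
  moreover have "real k powr \<alpha> / 2 < real k powr \<alpha>" using kp by simp
  ultimately show ?thesis unfolding Qcond_def using k by blast
qed

lemma P7_imp_Q:
  fixes m :: "nat \<Rightarrow> real" and \<alpha> :: real
  assumes pos: "\<forall>p. 0 < m p" and a: "0 < \<alpha>"
    and P7: "alpha_index m < ereal \<alpha>"
  shows "Qcond m \<alpha>"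
proof -
  let ?f = "\<lambda>x::real. m (nat \<lfloor>x\<rfloor> - 1)"
  obtain s where sS: "s \<in> {ereal a | a. \<exists>C>0. \<forall>\<Lambda>>1.
      Limsup at_top (\<lambda>x. SUP t\<in>{1..\<Lambda>}. ereal (?f (t * x) / (t powr a * ?f x))) \<le> ereal C}"
    and sl: "s < ereal \<alpha>"
    using P7 unfolding alpha_index_def upper_matuszewska_def Inf_less_iff by blast
  then obtain a C where sa: "s = ereal a" and C: "0 < C"
    and lim: "\<And>\<Lambda>. \<Lambda> > 1 \<Longrightarrow> Limsup at_top (\<lambda>x. SUP t\<in>{1..\<Lambda>}. ereal (?f (t * x) / (t powr a * ?f x))) \<le> ereal C"
    by blast
  have aa: "a < \<alpha>" using sl sa by simp
  define a' where "a' = max a 0"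
  define \<delta> where "\<delta> = \<alpha> - a'"
  have d0: "0 < \<delta>" using aa a by (simp add: \<delta>_def a'_def)
  have a'0: "0 \<le> a'" by (simp add: a'_def)
  define k where "k = nat \<lceil>(C+1) powr (1/\<delta>)\<rceil> + 2"
  have k2: "2 \<le> k" by (simp add: k_def)
  have kr: "(C+1) powr (1/\<delta>) < real k"
  proof -
    have "(C+1) powr (1/\<delta>) \<le> real (nat \<lceil>(C+1) powr (1/\<delta>)\<rceil>)" by (rule real_nat_ceiling_ge)
    moreover have "real k = real (nat \<lceil>(C+1) powr (1/\<delta>)\<rceil>) + 2" by (simp add: k_def)
    ultimately show ?thesis by linarith
  qed
  have "((C+1) powr (1/\<delta>)) powr \<delta> < real k powr \<delta>"
    using kr d0 by (intro powr_less_mono2) auto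
  hence Ck: "C + 1 < real k powr \<delta>" using d0 C by (simp add: powr_powr)
  define B where "B = (C+1) * real k powr a'"
  have "B < real k powr \<delta> * real k powr a'" unfolding B_def using Ck k2 by simp
  also have "\<dots> = real k powr \<alpha>" by (simp add: powr_add[symmetric] \<delta>_def)
  finally have Bk: "B < real k powr \<alpha>" .
  have k1: "1 < real k" using k2 by simp
  have "\<forall>\<^sub>F x in at_top. (SUP t\<in>{1..real k}. ereal (?f (t * x) / (t powr a * ?f x))) < ereal (C+1)"
    by (rule Limsup_lessD, rule le_less_trans[OF lim[OF k1]]) simp
  then obtain X where X: "\<And>x. x \<ge> X \<Longrightarrow> (SUP t\<in>{1..real k}. ereal (?f (t * x) / (t powr a * ?f x))) < ereal (C+1)"
    unfolding eventually_at_top_linorder by auto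
  have "\<forall>p\<ge>nat \<lceil>X\<rceil>. m (k*p) \<le> B * m p"
  proof (intro allI impI)
    fix p assume p: "nat \<lceil>X\<rceil> \<le> p"
    define x where "x = real (p+1)"
    define t where "t = real (k*p+1) / real (p+1)"
    have xX: "X \<le> x" using p unfolding x_def by linarith
    have "p \<le> k*p" using k2 by simp
    hence "real (p+1) \<le> real (k*p+1)" by linarith
    hence t1: "1 \<le> t" unfolding t_def by (simp add: le_divide_eq)
    have tk: "t \<le> real k" unfolding t_def using k2 by (simp add: divide_simps algebra_simps)
    have tx: "t * x = real (k*p+1)" unfolding t_def x_def by simp
    have fx: "?f x = m p" unfolding x_def floor_of_nat nat_int by simp
    have ftx: "?f (t * x) = m (k*p)" unfolding tx floor_of_nat nat_int by simp
    have "ereal (?f (t * x) / (t powr a * ?f x)) \<le> (SUP t\<in>{1..real k}. ereal (?f (t * x) / (t powr a * ?f x)))"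
      using t1 tk by (intro SUP_upper) auto
    also have "\<dots> < ereal (C+1)" by (rule X[OF xX])
    finally have "m (k*p) / (t powr a * m p) < C + 1" unfolding fx ftx by simp
    hence lt: "m (k*p) < (C+1) * (t powr a * m p)"
      using pos[rule_format, of p] t1 by (simp add: divide_simps)
    have "t powr a \<le> t powr a'" using t1 by (intro powr_mono) (auto simp: a'_def)
    also have "\<dots> \<le> real k powr a'" using t1 tk a'0 by (intro powr_mono2) auto
    finally have "(C+1) * (t powr a * m p) \<le> (C+1) * (real k powr a' * m p)"
      using C pos by (intro mult_left_mono mult_right_mono) (auto simp: less_imp_le)
    with lt show "m (k*p) \<le> B * m p" unfolding B_def by simp
  qed
  thus ?thesis unfolding Qcond_def using k2 Bk by blast
qed

lemma pow2_powr: "real ((2::nat)^n) powr \<alpha> = (2 powr \<alpha>)^n"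
proof (induction n)
  case (Suc n)
  have "real ((2::nat)^Suc n) powr \<alpha> = (2 * real ((2::nat)^n)) powr \<alpha>" by simp
  also have "\<dots> = 2 powr \<alpha> * real ((2::nat)^n) powr \<alpha>" using powr_mult[of 2 "real ((2::nat)^n)" \<alpha>] by simp
  finally show ?case using Suc by simp
qed simp

lemma geom_P6:
  fixes m :: "nat \<Rightarrow> real" and \<alpha> A s :: real
  assumes pos: "\<forall>p. 0 < m p" and A: "0 < A" and s: "0 < s" "s < 2 powr \<alpha>"
    and bound: "\<And>n p. 1 \<le> p \<Longrightarrow> m (2^n * p) \<le> A * s^n * m p"
  shows "\<forall>\<theta>. 0 < \<theta> \<and> \<theta> < 1 \<longrightarrow> (\<exists>k::nat. 2 \<le> k \<and> (\<forall>p\<ge>1. m (k * p) \<le> \<theta> * real k powr \<alpha> * m p))"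
proof (intro allI impI)
  fix \<theta> :: real assume th: "0 < \<theta> \<and> \<theta> < 1"
  define r where "r = s / 2 powr \<alpha>"
  have r0: "0 < r" "r < 1" using s by (auto simp: r_def)
  obtain n where n: "r ^ n < \<theta> / A" using real_arch_pow_inv[of "\<theta>/A" r] r0 th A by auto
  have rn: "r ^ Suc n \<le> r ^ n" using r0 by (simp add: power_decreasing less_imp_le)
  have "A * r ^ Suc n \<le> A * r ^ n" using rn A by (intro mult_left_mono) auto
  moreover have "A * r ^ n < \<theta>" using n A by (simp add: field_simps)
  ultimately have Ar: "A * r ^ Suc n \<le> \<theta>" by linarith
  define k :: nat where "k = 2 ^ Suc n"
  show "\<exists>k::nat. 2 \<le> k \<and> (\<forall>p\<ge>1. m (k * p) \<le> \<theta> * real k powr \<alpha> * m p)"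
  proof (intro exI[of _ k] conjI allI impI)
    show "2 \<le> k" unfolding k_def by (metis power_increasing one_le_numeral power_one_right Suc_le_mono le0 Suc_le_eq
        zero_less_Suc power_Suc0_right) 
    fix p :: nat assume p: "1 \<le> p"
    have sn: "s ^ Suc n = r ^ Suc n * (2 powr \<alpha>) ^ Suc n" by (simp add: r_def power_divide)
    have "m (k * p) \<le> A * s ^ Suc n * m p" unfolding k_def by (rule bound[OF p])
    also have "\<dots> = (A * r ^ Suc n) * ((2 powr \<alpha>) ^ Suc n * m p)" unfolding sn by (simp add: mult_ac)
    also have "\<dots> \<le> \<theta> * ((2 powr \<alpha>) ^ Suc n * m p)"
      using Ar pos by (intro mult_right_mono) (auto simp: less_imp_le)
    also have "(2 powr \<alpha>) ^ Suc n = real k powr \<alpha>" unfolding k_def by (rule pow2_powr[symmetric])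
    finally show "m (k * p) \<le> \<theta> * real k powr \<alpha> * m p" by (simp add: mult_ac)
  qed
qed

lemma P3_imp_P6:
  fixes m h :: "nat \<Rightarrow> real" and \<alpha> :: real
  assumes pos: "\<forall>p. 0 < m p" and a: "0 < \<alpha>"
    and eq: "seq_equiv h m"
    and sup: "(SUP p\<in>{1..}. ereal (h (2 * p) / h p)) < ereal (2 powr \<alpha>)"
  shows "\<forall>\<theta>. 0 < \<theta> \<and> \<theta> < 1 \<longrightarrow> (\<exists>k::nat. 2 \<le> k \<and> (\<forall>p\<ge>1. m (k * p) \<le> \<theta> * real k powr \<alpha> * m p))"
proof -
  obtain c where c1: "1 \<le> c" and hc: "\<And>p. m p / c \<le> h p \<and> h p \<le> c * m p"
    using eq unfolding seq_equiv_def by blast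
  have hpos: "0 < h p" for p using hc[of p] pos[rule_format, of p] c1
    by (smt (verit) divide_pos_pos)
  obtain s where s1: "(SUP p\<in>{1..}. ereal (h (2 * p) / h p)) < ereal s" and s2: "ereal s < ereal (2 powr \<alpha>)"
    using ereal_dense2[OF sup] by blast
  have hs: "h (2*p) \<le> s * h p" if "1 \<le> p" for p
  proof -
    have "ereal (h (2 * p) / h p) \<le> (SUP p\<in>{1..}. ereal (h (2 * p) / h p))"
      using that by (intro SUP_upper) auto
    hence "ereal (h (2 * p) / h p) < ereal s" using s1 by (rule order.strict_trans1)
    hence "h (2 * p) / h p < s" by simp
    thus ?thesis using hpos[of p] by (simp add: divide_simps)
  qed
  have s0: "0 < s"
  proof -
    have "0 < s * h 1" using hs[of 1] hpos[of 2] by simp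
    thus ?thesis using hpos[of 1] by (simp add: zero_less_mult_iff)
  qed
  have it: "h (2^n * p) \<le> s^n * h p" if "1 \<le> p" for n p
  proof (induction n)
    case (Suc n)
    have "h (2^Suc n * p) = h (2 * (2^n * p))" by (simp add: mult_ac)
    also have "\<dots> \<le> s * h (2^n * p)" using that by (intro hs) simp
    also have "\<dots> \<le> s * (s^n * h p)" using Suc s0 by (intro mult_left_mono) auto
    finally show ?case by simp
  qed simp
  show ?thesis
  proof (rule geom_P6[OF pos _ s0, of "c*c"])
    show "0 < c * c" using c1 by simp
    show "s < 2 powr \<alpha>" using s2 by simp
    fix n p :: nat assume p: "1 \<le> p"
    have "m (2^n * p) \<le> c * h (2^n * p)" using hc[of "2^n*p"] c1 by (simp add: divide_simps mult_ac)
    also have "\<dots> \<le> c * (s^n * h p)" using it[OF p, of n] c1 by (intro mult_left_mono) auto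
    also have "\<dots> \<le> c * (s^n * (c * m p))" using hc[of p] c1 s0 by (intro mult_left_mono) auto
    finally show "m (2^n * p) \<le> c * c * s^n * m p" by (simp add: mult_ac)
  qed
qed

lemma P1_imp_P6:
  fixes m :: "nat \<Rightarrow> real" and \<alpha> C :: real
  assumes pos: "\<forall>p. 0 < m p" and mono: "mono m" and a: "0 < \<alpha>" and C: "0 < C"
    and hyp: "\<forall>p. (\<Sum>k\<le>p. real (k + 1) powr (\<alpha> - 1) / m k) \<le> C * real (p + 1) powr \<alpha> / m p"
  shows "\<forall>\<theta>. 0 < \<theta> \<and> \<theta> < 1 \<longrightarrow> (\<exists>k::nat. 2 \<le> k \<and> (\<forall>p\<ge>1. m (k * p) \<le> \<theta> * real k powr \<alpha> * m p))"
proof -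
  define t where "t k = real (k + 1) powr (\<alpha> - 1) / m k" for k
  define S where "S p = (\<Sum>k\<le>p. t k)" for p
  have tpos: "0 < t k" for k unfolding t_def using pos by simp
  have Spos: "0 < S p" for p unfolding S_def by (rule sum_pos) (auto intro: tpos)
  have Smono: "S p \<le> S j" if "p \<le> j" for p j
    unfolding S_def by (rule sum_mono2) (use that tpos in \<open>auto simp: less_imp_le\<close>)
  have hypS: "S p \<le> C * real (p + 1) powr \<alpha> / m p" for p using hyp unfolding S_def t_def by blast
  have tlow: "S j / (C * real (j+1)) \<le> t j" for j
  proof -
    have e: "real (j+1) powr \<alpha> = real (j+1) powr (\<alpha> - 1) * real (j+1)"
      using powr_add[of "real (j+1)" "\<alpha> - 1" 1] by simp
    have "S j / (C * real (j+1)) \<le> (C * real (j + 1) powr \<alpha> / m j) / (C * real (j+1))"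
      using hypS[of j] C by (intro divide_right_mono) auto
    also have "\<dots> = t j" unfolding t_def e using C pos[rule_format, of j] by (simp add: divide_simps)
    finally show ?thesis .
  qed
  define q where "q = 1 + 1 / (3 * C)"
  have q1: "1 < q" using C by (simp add: q_def)
  have dbl: "q * S p \<le> S (2*p)" if p: "1 \<le> p" for p
  proof -
    have split: "S (p + p) = S p + (\<Sum>k = Suc p..p + p. t k)" unfolding S_def by (rule sum_up_index_split)
    have "(\<Sum>k = Suc p..p + p. S p / (C * real (2*p+1))) \<le> (\<Sum>k = Suc p..p + p. t k)"
    proof (rule sum_mono)
      fix k assume k: "k \<in> {Suc p..p + p}"
      have "S p / (C * real (2*p+1)) \<le> S k / (C * real (k+1))"
        using k C Spos[of p] Smono[of p k] by (intro frac_le mult_left_mono) (auto simp: less_imp_le)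
      also have "\<dots> \<le> t k" by (rule tlow)
      finally show "S p / (C * real (2*p+1)) \<le> t k" .
    qed
    moreover have "(\<Sum>k = Suc p..p + p. S p / (C * real (2*p+1))) = real p * (S p / (C * real (2*p+1)))"
      by simp
    moreover have "S p / (3 * C) \<le> real p * (S p / (C * real (2*p+1)))"
    proof -
      have "S p / (3 * C) = (S p / C) * (1/3)" by simp
      also have "\<dots> \<le> (S p / C) * (real p / real (2*p+1))"
        using p Spos[of p] C by (intro mult_left_mono) (auto simp: divide_simps)
      also have "\<dots> = real p * (S p / (C * real (2*p+1)))" by (simp add: field_simps)
      finally show ?thesis .
    qed
    ultimately have "S p + S p / (3 * C) \<le> S (p + p)" using split by linarith
    moreover have "q * S p = S p + S p / (3 * C)" by (simp add: q_def field_simps)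
    ultimately show ?thesis by (simp add: mult_2)
  qed
  have iter: "q^n * S p \<le> S (2^n * p)" if p: "1 \<le> p" for n p
  proof (induction n)
    case (Suc n)
    have "q^Suc n * S p = q * (q^n * S p)" by simp
    also have "\<dots> \<le> q * S (2^n * p)" using Suc q1 by (intro mult_left_mono) auto
    also have "\<dots> \<le> S (2 * (2^n * p))" using p by (intro dbl) simp
    finally show ?case by (simp add: mult_ac)
  qed simp
  define c0 where "c0 = min 1 (1/\<alpha>)"
  have c0: "0 < c0" using a by (simp add: c0_def)
  have low: "c0 * real (p+1) powr \<alpha> / m p \<le> S p" for p
  proof -
    have "c0 * real (p+1) powr \<alpha> / m p \<le> (\<Sum>k<Suc p. real (k+1) powr (\<alpha>-1)) / m p"
      using sum_powr_lower[OF a, of "Suc p"] pos[rule_format, of p] unfolding c0_def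
      by (intro divide_right_mono) auto
    also have "\<dots> = (\<Sum>k\<le>p. real (k+1) powr (\<alpha>-1) / m p)"
      by (simp add: sum_divide_distrib lessThan_Suc_atMost)
    also have "\<dots> \<le> S p" unfolding S_def t_def
    proof (rule sum_mono)
      fix k assume "k \<in> {..p}"
      hence "m k \<le> m p" using mono by (simp add: monoD)
      thus "real (k+1) powr (\<alpha>-1) / m p \<le> real (k+1) powr (\<alpha>-1) / m k"
        using pos by (intro divide_left_mono) auto
    qed
    finally show ?thesis .
  qed
  define s where "s = 2 powr \<alpha> / q"
  show ?thesis
  proof (rule geom_P6[OF pos _ _ _, of "C / c0" s])
    show "0 < C / c0" using C c0 by simp
    show "0 < s" using q1 by (simp add: s_def)
    show "s < 2 powr \<alpha>" using q1 by (simp add: s_def divide_less_eq)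
    fix n p :: nat assume p: "1 \<le> p"
    define K :: nat where "K = 2^n"
    have K1: "1 \<le> K" by (simp add: K_def)
    have Kp: "real (K*p+1) powr \<alpha> \<le> real K powr \<alpha> * real (p+1) powr \<alpha>"
    proof -
      have "real (K*p+1) \<le> real K * real (p+1)" using K1 by (simp add: algebra_simps)
      hence "real (K*p+1) powr \<alpha> \<le> (real K * real (p+1)) powr \<alpha>" using a by (intro powr_mono2) auto
      thus ?thesis by (simp add: powr_mult)
    qed
    have "S (K*p) * m (K*p) \<le> C * real (K*p+1) powr \<alpha>"
      using hypS[of "K*p"] pos[rule_format, of "K*p"] by (simp add: divide_simps)
    also have "\<dots> \<le> C * (real K powr \<alpha> * real (p+1) powr \<alpha>)" using Kp C by simp
    finally have A1: "S (K*p) * m (K*p) \<le> C * (real K powr \<alpha> * real (p+1) powr \<alpha>)" .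
    have A2: "q^n * (c0 * real (p+1) powr \<alpha> / m p) \<le> S (K*p)"
    proof -
      have "q^n * (c0 * real (p+1) powr \<alpha> / m p) \<le> q^n * S p" using low[of p] q1 by (intro mult_left_mono) auto
      also have "\<dots> \<le> S (K*p)" unfolding K_def by (rule iter[OF p])
      finally show ?thesis .
    qed
    have "q^n * (c0 * real (p+1) powr \<alpha> / m p) * m (K*p) \<le> S (K*p) * m (K*p)"
      using A2 pos by (intro mult_right_mono) (auto simp: less_imp_le)
    with A1 have A3: "q^n * (c0 * real (p+1) powr \<alpha> / m p) * m (K*p) \<le> C * (real K powr \<alpha> * real (p+1) powr \<alpha>)"
      by linarith
    have pp: "0 < real (p+1) powr \<alpha>" by simp
    have qn: "0 < q^n" using q1 by simp
    have "m (K*p) \<le> C * real K powr \<alpha> * m p / (q^n * c0)"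
      using A3 pp qn c0 pos[rule_format, of p] by (simp add: divide_simps mult_ac)
    also have "real K powr \<alpha> = (2 powr \<alpha>)^n" unfolding K_def by (rule pow2_powr)
    also have "C * (2 powr \<alpha>)^n * m p / (q^n * c0) = C / c0 * s^n * m p"
      by (simp add: s_def power_divide)
    finally show "m (2^n * p) \<le> C / c0 * s^n * m p" unfolding K_def .
  qed
qed

lemma P8_imp_P6:
  fixes m :: "nat \<Rightarrow> real" and \<alpha> C :: real
  assumes pos: "\<forall>p. 0 < m p" and mono: "mono m" and a: "0 < \<alpha>" and C: "0 < C"
    and hyp: "\<forall>p. summable (\<lambda>j. m (p + 1 + j) / real (p + 1 + j + 1) powr (1 + \<alpha>)) \<and>
                   (\<Sum>j. m (p + 1 + j) / real (p + 1 + j + 1) powr (1 + \<alpha>)) \<le> C * m p / real (p + 1) powr \<alpha>"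
  shows "\<forall>\<theta>. 0 < \<theta> \<and> \<theta> < 1 \<longrightarrow> (\<exists>k::nat. 2 \<le> k \<and> (\<forall>p\<ge>1. m (k * p) \<le> \<theta> * real k powr \<alpha> * m p))"
proof -
  define f where "f k = m k / real (k+1) powr (1+\<alpha>)" for k
  define T where "T p = (\<Sum>j. f (p+1+j))" for p
  have sm: "summable (\<lambda>j. f (p+1+j))" for p using hyp unfolding f_def by blast
  have hypT: "T p \<le> C * m p / real (p + 1) powr \<alpha>" for p using hyp unfolding T_def f_def by blast
  have fpos: "0 < f k" for k unfolding f_def using pos by simp
  have Tsplit: "T p = (\<Sum>j<d. f (p+1+j)) + T (p+d)" for p d
  proof -
    have "T p = (\<Sum>n. f (p+1+(n+d))) + (\<Sum>j<d. f (p+1+j))"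
      unfolding T_def by (rule suminf_split_initial_segment[OF sm])
    moreover have "(\<lambda>n. f (p+1+(n+d))) = (\<lambda>j. f (p+d+1+j))" by (simp add: algebra_simps)
    ultimately show ?thesis unfolding T_def by simp
  qed
  have Tnn: "0 \<le> T p" for p unfolding T_def by (rule suminf_nonneg[OF sm]) (use fpos in \<open>simp add: less_imp_le\<close>)
  have Tmono: "T (p+d) \<le> T p" for p d
  proof -
    have "0 \<le> (\<Sum>j<d. f (p+1+j))" using fpos by (simp add: sum_nonneg less_imp_le)
    thus ?thesis using Tsplit[of p d] by linarith
  qed
  have Tmono2: "T j \<le> T p" if "p \<le> j" for p j using Tmono[of p "j - p"] that by simp
  have flow: "T k / (C * real (k+1)) \<le> f k" for k
  proof -
    have e: "real (k+1) powr (1+\<alpha>) = real (k+1) * real (k+1) powr \<alpha>"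
      using powr_add[of "real (k+1)" 1 \<alpha>] by simp
    have "T k / (C * real (k+1)) \<le> (C * m k / real (k + 1) powr \<alpha>) / (C * real (k+1))"
      using hypT[of k] C by (intro divide_right_mono) auto
    also have "\<dots> = f k" unfolding f_def e using C by (simp add: divide_simps mult_ac)
    finally show ?thesis .
  qed
  define q where "q = 1 + 1 / (3 * C)"
  have q1: "1 < q" using C by (simp add: q_def)
  have dbl: "q * T (2*p) \<le> T p" if p: "1 \<le> p" for p
  proof -
    have split: "T p = (\<Sum>j<p. f (p+1+j)) + T (p+p)" by (rule Tsplit)
    have "(\<Sum>j<p. T (2*p) / (C * real (2*p+1))) \<le> (\<Sum>j<p. f (p+1+j))"
    proof (rule sum_mono)
      fix j assume j: "j \<in> {..<p}"
      have "T (2*p) / (C * real (2*p+1)) \<le> T (p+1+j) / (C * real (p+1+j+1))"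
        using j C Tnn[of "2*p"] Tmono2[of "p+1+j" "2*p"] by (intro frac_le mult_left_mono) auto
      also have "\<dots> \<le> f (p+1+j)" by (rule flow)
      finally show "T (2*p) / (C * real (2*p+1)) \<le> f (p+1+j)" .
    qed
    moreover have "(\<Sum>j<p. T (2*p) / (C * real (2*p+1))) = real p * (T (2*p) / (C * real (2*p+1)))"
      by simp
    moreover have "T (2*p) / (3 * C) \<le> real p * (T (2*p) / (C * real (2*p+1)))"
    proof -
      have "T (2*p) / (3 * C) = (T (2*p) / C) * (1/3)" by simp
      also have "\<dots> \<le> (T (2*p) / C) * (real p / real (2*p+1))"
        using p Tnn[of "2*p"] C by (intro mult_left_mono) (auto simp: divide_simps)
      also have "\<dots> = real p * (T (2*p) / (C * real (2*p+1)))" by (simp add: field_simps)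
      finally show ?thesis .
    qed
    ultimately have W: "T (2*p) / (3 * C) \<le> (\<Sum>j<p. f (p+1+j))" by linarith
    have pp2: "p + p = 2 * p" by simp
    have "T (2*p) + T (2*p) / (3 * C) \<le> T p" using split W unfolding pp2 by linarith
    moreover have "q * T (2*p) = T (2*p) + T (2*p) / (3 * C)" by (simp add: q_def field_simps)
    ultimately show ?thesis by linarith
  qed
  have iter: "q^n * T (2^n * p) \<le> T p" if p: "1 \<le> p" for n p
  proof (induction n)
    case (Suc n)
    have "q^Suc n * T (2^Suc n * p) = q^n * (q * T (2 * (2^n * p)))" by (simp add: mult_ac)
    also have "\<dots> \<le> q^n * T (2^n * p)" using q1 p by (intro mult_left_mono dbl) auto
    also have "\<dots> \<le> T p" by (rule Suc)
    finally show ?case .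
  qed simp
  have low: "m p / (2 powr (1+\<alpha>) * real (p+1) powr \<alpha>) \<le> T p" for p
  proof -
    have "(\<Sum>j<Suc p. m p / (2 * real (p+1)) powr (1+\<alpha>)) \<le> (\<Sum>j<Suc p. f (p+1+j))"
    proof (rule sum_mono)
      fix j assume j: "j \<in> {..<Suc p}"
      have "m p \<le> m (p+1+j)" using mono by (simp add: monoD)
      moreover have "real (p+1+j+1) powr (1+\<alpha>) \<le> (2 * real (p+1)) powr (1+\<alpha>)"
        using j a by (intro powr_mono2) auto
      ultimately show "m p / (2 * real (p+1)) powr (1+\<alpha>) \<le> f (p+1+j)"
        unfolding f_def using pos by (intro frac_le) (auto simp: less_imp_le)
    qed
    also have "\<dots> \<le> T p" unfolding T_def
      by (rule sum_le_suminf[OF sm]) (use fpos in \<open>auto simp: less_imp_le\<close>)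
    finally have A: "real (Suc p) * (m p / (2 * real (p+1)) powr (1+\<alpha>)) \<le> T p" by simp
    have e: "(2 * real (p+1)) powr (1+\<alpha>) = 2 powr (1+\<alpha>) * (real (p+1) * real (p+1) powr \<alpha>)"
      using powr_mult[of 2 "real (p+1)" "1+\<alpha>"] powr_add[of "real (p+1)" 1 \<alpha>] by simp
    have "real (Suc p) * (m p / (2 * real (p+1)) powr (1+\<alpha>)) = m p / (2 powr (1+\<alpha>) * real (p+1) powr \<alpha>)"
      unfolding e by (simp add: divide_simps)
    with A show ?thesis by simp
  qed
  define s where "s = 2 powr \<alpha> / q"
  show ?thesis
  proof (rule geom_P6[OF pos _ _ _, of "2 powr (1+\<alpha>) * C" s])
    show "0 < 2 powr (1+\<alpha>) * C" using C by simp
    show "0 < s" using q1 by (simp add: s_def)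
    show "s < 2 powr \<alpha>" using q1 by (simp add: s_def divide_less_eq)
    fix n p :: nat assume p: "1 \<le> p"
    define K :: nat where "K = 2^n"
    have K1: "1 \<le> K" by (simp add: K_def)
    have Kp: "real (K*p+1) powr \<alpha> \<le> real K powr \<alpha> * real (p+1) powr \<alpha>"
    proof -
      have "real (K*p+1) \<le> real K * real (p+1)" using K1 by (simp add: algebra_simps)
      hence "real (K*p+1) powr \<alpha> \<le> (real K * real (p+1)) powr \<alpha>" using a by (intro powr_mono2) auto
      thus ?thesis by (simp add: powr_mult)
    qed
    have qn: "0 < q^n" using q1 by simp
    have "q^n * (m (K*p) / (2 powr (1+\<alpha>) * real (K*p+1) powr \<alpha>)) \<le> q^n * T (K*p)"
      using low[of "K*p"] qn by (intro mult_left_mono) auto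
    also have "\<dots> \<le> T p" unfolding K_def by (rule iter[OF p])
    also have "\<dots> \<le> C * m p / real (p + 1) powr \<alpha>" by (rule hypT)
    finally have A: "q^n * (m (K*p) / (2 powr (1+\<alpha>) * real (K*p+1) powr \<alpha>)) \<le> C * m p / real (p + 1) powr \<alpha>" .
    have pp: "0 < real (p+1) powr \<alpha>" by simp
    have kp0: "(0::real) < real (K*p+1)" by (simp only: of_nat_0_less_iff)
    have kp: "0 < real (K*p+1) powr \<alpha>" using kp0 by simp
    have "m (K*p) \<le> 2 powr (1+\<alpha>) * C * m p * (real (K*p+1) powr \<alpha> / real (p+1) powr \<alpha>) / q^n"
      using A pp kp qn by (simp add: divide_simps mult_ac)
    also have "\<dots> \<le> 2 powr (1+\<alpha>) * C * m p * real K powr \<alpha> / q^n"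
    proof -
      have "real (K*p+1) powr \<alpha> / real (p+1) powr \<alpha> \<le> real K powr \<alpha>"
        using Kp pp by (simp add: divide_simps)
      thus ?thesis using C pos qn
        by (intro divide_right_mono mult_left_mono) (auto simp: less_imp_le)
    qed
    also have "real K powr \<alpha> = (2 powr \<alpha>)^n" unfolding K_def by (rule pow2_powr)
    also have "2 powr (1+\<alpha>) * C * m p * (2 powr \<alpha>)^n / q^n = 2 powr (1+\<alpha>) * C * s^n * m p"
      by (simp add: s_def power_divide)
    finally show "m (2^n * p) \<le> 2 powr (1+\<alpha>) * C * s^n * m p" unfolding K_def .
  qed
qed

theorem theorem3p16:
  fixes M m :: "nat \<Rightarrow> real" and \<alpha> :: real
  assumes "weight_sequence M"
    and "m = quotients M"
    and "0 < \<alpha>"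
  defines "P1 \<equiv> (\<exists>C>0. \<forall>p. (\<Sum>k\<le>p. real (k + 1) powr (\<alpha> - 1) / m k)
                              \<le> C * real (p + 1) powr \<alpha> / m p)"
    and "P2 \<equiv> (\<exists>\<epsilon>. 0 < \<epsilon> \<and> \<epsilon> < \<alpha> \<and>
                   almost_decreasing (\<lambda>p. m p / real p powr (\<alpha> - \<epsilon>)))"
    and "P3 \<equiv> (\<exists>h. seq_equiv h m \<and>
                   (\<forall>p. real (Suc p + 1) powr (- \<alpha>) * h (Suc p) \<le> real (p + 1) powr (- \<alpha>) * h p) \<and>
                   (SUP p\<in>{1..}. ereal (h (2 * p) / h p)) < ereal (2 powr \<alpha>))"
    and "P4 \<equiv> ((\<lambda>k. limsup (\<lambda>p. ereal (m (k * p) / (real k powr \<alpha> * m p)))) \<longlonglongrightarrow> 0)"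
    and "P5 \<equiv> (\<exists>k::nat. 2 \<le> k \<and> limsup (\<lambda>p. ereal (m (k * p) / m p)) < ereal (real k powr \<alpha>))"
    and "P6 \<equiv> (\<forall>\<theta>. 0 < \<theta> \<and> \<theta> < 1 \<longrightarrow>
                   (\<exists>k::nat. 2 \<le> k \<and> (\<forall>p\<ge>1. m (k * p) \<le> \<theta> * real k powr \<alpha> * m p)))"
    and "P7 \<equiv> (alpha_index m < ereal \<alpha>)"
    and "P8 \<equiv> (\<exists>C>0. \<forall>p. summable (\<lambda>j. m (p + 1 + j) / real (p + 1 + j + 1) powr (1 + \<alpha>)) \<and>
                   (\<Sum>j. m (p + 1 + j) / real (p + 1 + j + 1) powr (1 + \<alpha>)) \<le> C * m p / real (p + 1) powr \<alpha>)"
  shows "(P1 \<longleftrightarrow> P2) \<and> (P2 \<longleftrightarrow> P3) \<and> (P3 \<longleftrightarrow> P4) \<and> (P4 \<longleftrightarrow> P5) \<and>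
         (P5 \<longleftrightarrow> P6) \<and> (P6 \<longleftrightarrow> P7) \<and> (P7 \<longleftrightarrow> P8)"
proof -
  have pos: "\<forall>p. 0 < m p" and mono: "mono m" using ws_props[OF assms(1,2)] by auto
  have a: "0 < \<alpha>" by (rule assms(3))
  have QP2: "P2" if hq: "Qcond m \<alpha>"
  proof -
    obtain k B N where "2 \<le> k" "B < real k powr \<alpha>" "\<forall>p\<ge>N. m (k*p) \<le> B * m p"
      using hq unfolding Qcond_def by blast
    from Q_imp_P2[OF pos mono a this] show ?thesis unfolding P2_def by blast
  qed
  have P2R: "\<exists>\<beta> D. 0 < \<beta> \<and> \<beta> < \<alpha> \<and> 1 \<le> D \<and>
           (\<forall>k p. k \<le> p \<longrightarrow> m p * real (k+1) powr \<beta> \<le> D * real (p+1) powr \<beta> * m k)" if hq: "P2"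
  proof -
    obtain \<epsilon> where "0 < \<epsilon>" "\<epsilon> < \<alpha>" "almost_decreasing (\<lambda>p. m p / real p powr (\<alpha> - \<epsilon>))"
      using hq unfolding P2_def by blast
    from P2_imp_R[OF pos mono this] show ?thesis .
  qed
  have P6P2: "P2" if "P6"
    using QP2 P5_imp_Q[OF pos] P6_imp_P5[OF pos] that unfolding P6_def by blast
  have P2all: "P1 \<and> P3 \<and> P4 \<and> P7 \<and> P8" if hq: "P2"
  proof -
    obtain \<beta> D where b: "0 < \<beta>" "\<beta> < \<alpha>" and D1: "1 \<le> D"
      and R: "\<forall>k p. k \<le> p \<longrightarrow> m p * real (k+1) powr \<beta> \<le> D * real (p+1) powr \<beta> * m k"
      using P2R[OF hq] by blast
    show ?thesis
      unfolding P1_def P3_def P4_def P7_def P8_def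
      using R_imp_P1[OF pos b D1 R] R_imp_P3[OF pos b D1 R] R_imp_P4[OF pos b D1 R]
        R_imp_P7[OF pos b D1 R] R_imp_P8[OF pos b D1 R]
      by blast
  qed
  have P1P6: "P6" if hq: "P1"
  proof -
    obtain C where "0 < C" "\<forall>p. (\<Sum>k\<le>p. real (k + 1) powr (\<alpha> - 1) / m k) \<le> C * real (p + 1) powr \<alpha> / m p"
      using hq unfolding P1_def by blast
    from P1_imp_P6[OF pos mono a this] show ?thesis unfolding P6_def .
  qed
  have P8P6: "P6" if hq: "P8"
  proof -
    obtain C where "0 < C" "\<forall>p. summable (\<lambda>j. m (p + 1 + j) / real (p + 1 + j + 1) powr (1 + \<alpha>)) \<and>
                   (\<Sum>j. m (p + 1 + j) / real (p + 1 + j + 1) powr (1 + \<alpha>)) \<le> C * m p / real (p + 1) powr \<alpha>"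
      using hq unfolding P8_def by blast
    from P8_imp_P6[OF pos mono a this] show ?thesis unfolding P6_def .
  qed
  have P3P6: "P6" if hq: "P3"
  proof -
    obtain h where "seq_equiv h m" "(SUP p\<in>{1..}. ereal (h (2 * p) / h p)) < ereal (2 powr \<alpha>)"
      using hq unfolding P3_def by blast
    from P3_imp_P6[OF pos a this] show ?thesis unfolding P6_def .
  qed
  have P4P2: "P2" if "P4" using QP2 P4_imp_Q[OF pos a] that unfolding P4_def by blast
  have P7P2: "P2" if "P7" using QP2 P7_imp_Q[OF pos a] that unfolding P7_def by blast
  have P5P2: "P2" if "P5" using QP2 P5_imp_Q[OF pos] that unfolding P5_def by blast
  have P2P6: "P6" if "P2" using P2all[OF that] P1P6 by blast
  have P2P5: "P5" if "P2" using P6_imp_P5[OF pos] P2P6[OF that] unfolding P6_def P5_def by blast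
  show ?thesis
    using P2all P1P6 P6P2 P3P6 P4P2 P7P2 P8P6 P5P2 P2P5 P2P6 by blast
qed

end
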